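(* Under the standing assumptions below, let $\lambda\in c_H$ and suppose $k(\lambda)$ is well defined and belongs to $\ell^q$ for some $1\le q<\infty$. Then $\lim_{N\to\infty}\|k(\lambda;N)-k(\lambda)\|_{\ell^q}=0$.
   Context: Standing assumptions: $a=(a_n)$ strictly decreasing positive reals with $a_n\to0$; $b_n\ne0$ for all $n$. $c_H:=\{(\lambda_n)\in c_0\mid\operatorname{re}\lambda_n\le0\ \forall n\}$. $k_n(\lambda):=-\frac{a_n-\lambda_n}{b_n}\prod_{m\ge1,\,m\neq n}\frac{1-\lambda_m/a_n}{1-a_m/a_n}$. For $N\in\mathbb{N}$, $k(\lambda;N)$ is the eventually zero sequence with $k_n(\lambda;N):=-\frac{a_n-\lambda_n}{b_n}\prod_{m=1,\,m\ne n}^N\frac{1-\lambda_m/a_n}{1-a_m/a_n}$ for $1\le n\le N$ and $k_n(\lambda;N):=0$ for $n>N$. *)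

theory Defs
  imports "HOL-Analysis.Analysis"
begin

(* Sequences are indexed from 0 (the paper indexes from 1; this is a pure shift). *)

definition c_H :: "(nat \<Rightarrow> complex) set" where
  "c_H = {l. l \<longlonglongrightarrow> 0 \<and> (\<forall>n. Re (l n) \<le> 0)}"

(* the m-th factor of the product defining k_n; the factor m = n is omitted (set to 1) *)
definition kfactor :: "(nat \<Rightarrow> real) \<Rightarrow> (nat \<Rightarrow> complex) \<Rightarrow> nat \<Rightarrow> nat \<Rightarrow> complex" where
  "kfactor a l n m = (if m = n then 1
     else (1 - l m / complex_of_real (a n)) / complex_of_real (1 - a m / a n))"

definition k_welldef :: "(nat \<Rightarrow> real) \<Rightarrow> (nat \<Rightarrow> complex) \<Rightarrow> bool" where
  "k_welldef a l \<longleftrightarrow> (\<forall>n. convergent_prod (kfactor a l n))"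

definition k :: "(nat \<Rightarrow> real) \<Rightarrow> (nat \<Rightarrow> complex) \<Rightarrow> (nat \<Rightarrow> complex) \<Rightarrow> nat \<Rightarrow> complex" where
  "k a b l n = - (complex_of_real (a n) - l n) / b n * prodinf (kfactor a l n)"

(* k(lambda;N): indices n < N (i.e. 1..N in the paper), product over m < N, m \<noteq> n *)
definition kN :: "(nat \<Rightarrow> real) \<Rightarrow> (nat \<Rightarrow> complex) \<Rightarrow> (nat \<Rightarrow> complex) \<Rightarrow> nat \<Rightarrow> nat \<Rightarrow> complex" where
  "kN a b l N n = (if n < N then
      - (complex_of_real (a n) - l n) / b n *
        (\<Prod>m\<in>{..<N} - {n}. (1 - l m / complex_of_real (a n)) / complex_of_real (1 - a m / a n))
    else 0)"

definition in_lq :: "real \<Rightarrow> (nat \<Rightarrow> complex) \<Rightarrow> bool" where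
  "in_lq q x \<longleftrightarrow> summable (\<lambda>n. norm (x n) powr q)"

definition lq_norm :: "real \<Rightarrow> (nat \<Rightarrow> complex) \<Rightarrow> real" where
  "lq_norm q x = (\<Sum>n. norm (x n) powr q) powr (1 / q)"

end

theory Submission
  imports Defs
begin

lemma factor_ge1:
  fixes a :: "nat \<Rightarrow> real" and l :: "nat \<Rightarrow> complex"
  assumes a_pos: "\<And>n. a n > 0"
    and a_dec: "\<And>m n. m < n \<Longrightarrow> a n < a m"
    and re: "\<And>n. Re (l n) \<le> 0"
    and mn: "n < m"
  shows "1 \<le> norm (kfactor a l n m)"
proof -
  have an: "a n > 0" and am: "a m > 0" and lt: "a m < a n" using a_pos a_dec mn by auto
  define c where "c = 1 - a m / a n"
  have c0: "0 < c" and c1: "c \<le> 1" using an am lt by (auto simp: c_def field_simps)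
  have "Re (1 - l m / complex_of_real (a n)) = 1 - Re (l m) / a n"
    by (simp add: Re_divide_of_real)
  also have "\<dots> \<ge> 1" using re[of m] an by (simp add: divide_nonpos_pos)
  finally have g: "1 \<le> norm (1 - l m / complex_of_real (a n))"
    using complex_Re_le_cmod order_trans by blast
  have "kfactor a l n m = (1 - l m / complex_of_real (a n)) / complex_of_real c"
    using mn by (simp add: kfactor_def c_def)
  hence "norm (kfactor a l n m) = norm (1 - l m / complex_of_real (a n)) / c"
    using c0 by (simp add: norm_divide)
  also have "\<dots> \<ge> norm (1 - l m / complex_of_real (a n))"
    using c0 c1 g by (simp add: le_divide_eq mult_left_le)
  finally show ?thesis using g by linarith
qed

lemma partial_le:
  fixes a :: "nat \<Rightarrow> real" and l :: "nat \<Rightarrow> complex"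
  assumes a_pos: "\<And>n. a n > 0"
    and a_dec: "\<And>m n. m < n \<Longrightarrow> a n < a m"
    and re: "\<And>n. Re (l n) \<le> 0"
    and cp: "convergent_prod (kfactor a l n)"
    and nN: "n < N"
  shows "norm (\<Prod>m<N. kfactor a l n m) \<le> norm (prodinf (kfactor a l n))"
proof -
  have lim: "(\<lambda>M. \<Prod>m<M. kfactor a l n m) \<longlonglongrightarrow> prodinf (kfactor a l n)"
    using convergent_prod_LIMSEQ[OF cp] LIMSEQ_lessThan_iff_atMost by blast
  have "eventually (\<lambda>M. norm (\<Prod>m<N. kfactor a l n m) \<le> norm (\<Prod>m<M. kfactor a l n m)) sequentially"
    unfolding eventually_sequentially
  proof (intro exI allI impI)
    fix M assume NM: "N \<le> M"
    have split: "{..<M} = {..<N} \<union> {N..<M}" using NM by auto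
    have "(\<Prod>m<M. kfactor a l n m) = (\<Prod>m<N. kfactor a l n m) * (\<Prod>m\<in>{N..<M}. kfactor a l n m)"
      unfolding split by (subst prod.union_disjoint) auto
    hence e: "norm (\<Prod>m<M. kfactor a l n m) = norm (\<Prod>m<N. kfactor a l n m) * (\<Prod>m\<in>{N..<M}. norm (kfactor a l n m))"
      by (simp add: norm_mult prod_norm)
    have "1 \<le> (\<Prod>m\<in>{N..<M}. norm (kfactor a l n m))"
      by (rule prod_ge_1) (use factor_ge1[OF a_pos a_dec re] nN in auto)
    then show "norm (\<Prod>m<N. kfactor a l n m) \<le> norm (\<Prod>m<M. kfactor a l n m)"
      unfolding e by (simp add: mult_le_cancel_left1)
  qed
  then show ?thesis
    using tendsto_norm[OF lim] by (intro tendsto_lowerbound) auto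
qed

lemma kN_eq:
  assumes "n < N"
  shows "kN a b l N n = - (complex_of_real (a n) - l n) / b n * (\<Prod>m<N. kfactor a l n m)"
proof -
  have "(\<Prod>m<N. kfactor a l n m) = kfactor a l n n * (\<Prod>m\<in>{..<N} - {n}. kfactor a l n m)"
    using assms by (subst prod.remove[of _ n]) auto
  also have "\<dots> = (\<Prod>m\<in>{..<N} - {n}. (1 - l m / complex_of_real (a n)) / complex_of_real (1 - a m / a n))"
    by (simp add: kfactor_def)
  finally show ?thesis using assms by (simp add: kN_def)
qed

theorem proposition1:
  fixes a :: "nat \<Rightarrow> real" and b l :: "nat \<Rightarrow> complex" and q :: real
  assumes a_pos: "\<And>n. a n > 0"
    and a_dec: "\<And>m n. m < n \<Longrightarrow> a n < a m"
    and a_lim: "a \<longlonglongrightarrow> 0"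
    and b_nz: "\<And>n. b n \<noteq> 0"
    and l_cH: "l \<in> c_H"
    and wd: "k_welldef a l"
    and q: "1 \<le> q"
    and lq: "in_lq q (k a b l)"
  shows "(\<lambda>N. lq_norm q (\<lambda>n. kN a b l N n - k a b l n)) \<longlonglongrightarrow> 0"
proof -
  have re: "\<And>n. Re (l n) \<le> 0" using l_cH by (auto simp: c_H_def)
  have cp: "\<And>n. convergent_prod (kfactor a l n)" using wd by (auto simp: k_welldef_def)
  have dom: "norm (kN a b l N n - k a b l n) \<le> 2 * norm (k a b l n)" for N n
  proof (cases "n < N")
    case True
    have pl: "norm (\<Prod>m<N. kfactor a l n m) \<le> norm (prodinf (kfactor a l n))"
      by (rule partial_le[OF a_pos a_dec re cp True]) blast
    have "norm (kN a b l N n) \<le> norm (k a b l n)"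
      unfolding kN_eq[OF True] k_def norm_mult
      by (rule mult_left_mono[OF pl norm_ge_zero])
    then show ?thesis using norm_triangle_ineq4[of "kN a b l N n" "k a b l n"] by linarith
  next
    case False
    then show ?thesis by (simp add: kN_def)
  qed
  have pw: "(\<lambda>N. kN a b l N n) \<longlonglongrightarrow> k a b l n" for n
  proof -
    have lim: "(\<lambda>M. \<Prod>m<M. kfactor a l n m) \<longlonglongrightarrow> prodinf (kfactor a l n)"
      using convergent_prod_LIMSEQ[OF cp[of n]] LIMSEQ_lessThan_iff_atMost by blast
    have "(\<lambda>N. - (complex_of_real (a n) - l n) / b n * (\<Prod>m<N. kfactor a l n m)) \<longlonglongrightarrow> k a b l n"
      unfolding k_def by (rule tendsto_mult[OF tendsto_const lim])
    moreover have "eventually (\<lambda>N. - (complex_of_real (a n) - l n) / b n * (\<Prod>m<N. kfactor a l n m) = kN a b l N n) sequentially"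
      unfolding eventually_sequentially
    proof (intro exI[of _ "Suc n"] allI impI)
      fix N assume "Suc n \<le> N"
      then have "n < N" by simp
      then show "- (complex_of_real (a n) - l n) / b n * (\<Prod>m<N. kfactor a l n m) = kN a b l N n"
        by (rule kN_eq[symmetric])
    qed
    ultimately show ?thesis by (rule Lim_transform_eventually)
  qed
  define A where "A = (\<lambda>n N. norm (kN a b l N n - k a b l n) powr q)"
  have q0: "q > 0" using q by simp
  have Alim: "(\<lambda>N. A n N) \<longlonglongrightarrow> 0" for n
  proof -
    have "(\<lambda>N. norm (kN a b l N n - k a b l n)) \<longlonglongrightarrow> 0"
      using pw[of n] by (intro tendsto_norm_zero) (rule LIM_zero)
    then show ?thesis unfolding A_def
      by (intro tendsto_zero_powrI[OF _ tendsto_const _ q0]) auto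
  qed
  have summ: "summable (\<lambda>n. (2 * norm (k a b l n)) powr q)"
  proof -
    have "(\<lambda>n. (2 * norm (k a b l n)) powr q) = (\<lambda>n. 2 powr q * norm (k a b l n) powr q)"
      by (simp add: powr_mult)
    then show ?thesis using lq by (simp add: in_lq_def summable_mult)
  qed
  have bound: "eventually (\<lambda>(n,N). norm (A n N) \<le> (2 * norm (k a b l n)) powr q) (sequentially \<times>\<^sub>F sequentially)"
  proof (intro always_eventually allI)
    fix x :: "nat \<times> nat"
    obtain n N where x: "x = (n, N)" by fastforce
    have "norm (kN a b l N n - k a b l n) powr q \<le> (2 * norm (k a b l n)) powr q"
      by (rule powr_mono2) (use q0 dom in auto)
    then show "(\<lambda>(n,N). norm (A n N) \<le> (2 * norm (k a b l n)) powr q) x"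
      unfolding x A_def by simp
  qed
  have "(\<lambda>N. suminf (\<lambda>n. A n N)) \<longlonglongrightarrow> suminf (\<lambda>n. 0::real)"
    using tannerys_theorem[OF Alim bound summ] by simp
  hence S: "(\<lambda>N. \<Sum>n. A n N) \<longlonglongrightarrow> 0" by simp
  have "(\<lambda>N. (\<Sum>n. A n N) powr (1/q)) \<longlonglongrightarrow> 0"
  proof (rule tendsto_zero_powrI[OF S tendsto_const])
    have sA: "summable (\<lambda>n. A n N)" for N
      by (rule summable_comparison_test[OF _ summ])
         (use dom q0 in \<open>auto simp: A_def intro!: exI[of _ 0] powr_mono2\<close>)
    show "\<forall>\<^sub>F N in sequentially. 0 \<le> (\<Sum>n. A n N)"
      by (intro always_eventually allI suminf_nonneg[OF sA]) (simp add: A_def)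
  qed (use q0 in simp)
  then show ?thesis by (simp add: lq_norm_def A_def)
qed

end
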